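(* Let $t,\Delta,\omega\ge 2$ be integers and write $\Delta=a(\omega-1)+b$ with integers $a\ge0$ and $0\le b<\omega-1$. Then \[ f_t(\Delta,\omega)\ \le\ \frac1t\,k_{t-1}\big(T(\Delta,\omega-1)\big)=\frac1t\sum_{k=0}^{b}\binom{b}{k}\binom{\omega-1-b}{t-1-k}(a+1)^k a^{t-1-k} \] (with the convention $0^0=1$).
   Context: $\mathcal{G}(\Delta,\omega)$ denotes the class of finite simple graphs $G$ with maximum degree $\Delta(G)\le\Delta$ and clique number $\omega(G)\le\omega$. $k_t(G)$ is the number of copies of $K_t$ in $G$ and $\rho_t(G)=k_t(G)/|V(G)|$. $f_t(\Delta,\omega)=\sup\{\rho_t(G): G\in\mathcal{G}(\Delta,\omega),\ |V(G)|\ge 1\}$. $T(n,r)$ denotes the $r$-partite Turán graph on $n$ vertices: the complete $r$-partite graph on $n$ vertices whose part sizes are all $\lfloor n/r\rfloor$ or $\lceil n/r\rceil$ (when $n<r$ this is $K_n$). *)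

theory Defs
  imports Complex_Main
begin

definition simple_graph :: "'a set \<Rightarrow> 'a set set \<Rightarrow> bool" where
  "simple_graph V E \<longleftrightarrow> finite V \<and> (\<forall>e\<in>E. e \<subseteq> V \<and> card e = 2)"

definition is_clique :: "'a set set \<Rightarrow> 'a set \<Rightarrow> bool" where
  "is_clique E S \<longleftrightarrow> (\<forall>u\<in>S. \<forall>v\<in>S. u \<noteq> v \<longrightarrow> {u, v} \<in> E)"

definition k_cliques :: "nat \<Rightarrow> 'a set \<Rightarrow> 'a set set \<Rightarrow> nat" where
  "k_cliques t V E = card {S. S \<subseteq> V \<and> card S = t \<and> is_clique E S}"

definition degree :: "'a set \<Rightarrow> 'a set set \<Rightarrow> 'a \<Rightarrow> nat" where
  "degree V E v = card {u \<in> V. {u, v} \<in> E}"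

definition in_class :: "nat \<Rightarrow> nat \<Rightarrow> 'a set \<Rightarrow> 'a set set \<Rightarrow> bool" where
  "in_class \<Delta> \<omega> V E \<longleftrightarrow> simple_graph V E
     \<and> (\<forall>v\<in>V. degree V E v \<le> \<Delta>)
     \<and> (\<forall>S. S \<subseteq> V \<and> is_clique E S \<longrightarrow> card S \<le> \<omega>)"

definition rho :: "nat \<Rightarrow> 'a set \<Rightarrow> 'a set set \<Rightarrow> real" where
  "rho t V E = real (k_cliques t V E) / real (card V)"

text \<open>f_t(Delta, omega): supremum over all finite simple graphs (up to isomorphism,
so vertex sets may be taken to be finite sets of naturals) with at least one vertex.\<close>
definition f_sup :: "nat \<Rightarrow> nat \<Rightarrow> nat \<Rightarrow> real" where
  "f_sup t \<Delta> \<omega> = Sup {rho t V E | (V :: nat set) (E :: nat set set).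
                          in_class \<Delta> \<omega> V E \<and> V \<noteq> {}}"

text \<open>Turan graph T(n, r) (r \<ge> 1): vertices 0..<n, vertex i in part (i mod r),
complete r-partite; part sizes are floor(n/r) or ceil(n/r); for n < r it is K_n.\<close>
definition turan_V :: "nat \<Rightarrow> nat set" where
  "turan_V n = {0..<n}"

definition turan_E :: "nat \<Rightarrow> nat \<Rightarrow> nat set set" where
  "turan_E n r = {{i, j} | i j. i < n \<and> j < n \<and> i mod r \<noteq> j mod r}"

end

theory Submission
  imports Defs "HOL-Library.FuncSet"
begin

definition TCset :: "nat \<Rightarrow> nat \<Rightarrow> nat \<Rightarrow> nat set set" where
  "TCset n r s = {S. S \<subseteq> {0..<n} \<and> card S = s \<and> inj_on (\<lambda>x. x mod r) S}"

lemma turan_edge: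
  assumes "u \<noteq> v"
  shows "{u, v} \<in> turan_E n r \<longleftrightarrow> (u < n \<and> v < n \<and> u mod r \<noteq> v mod r)"
proof
  assume "{u, v} \<in> turan_E n r"
  then obtain i j where "{u,v} = {i,j}" "i < n" "j < n" "i mod r \<noteq> j mod r"
    unfolding turan_E_def by blast
  then show "u < n \<and> v < n \<and> u mod r \<noteq> v mod r"
    by (auto simp: doubleton_eq_iff)
next
  assume "u < n \<and> v < n \<and> u mod r \<noteq> v mod r"
  then show "{u, v} \<in> turan_E n r" unfolding turan_E_def by blast
qed

lemma turan_clique:
  assumes "S \<subseteq> {0..<n}"
  shows "is_clique (turan_E n r) S \<longleftrightarrow> inj_on (\<lambda>x. x mod r) S"
  using assms unfolding is_clique_def inj_on_def
  by (auto simp: turan_edge subset_iff)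

lemma KT: "k_cliques s (turan_V n) (turan_E n r) = card (TCset n r s)"
  unfolding k_cliques_def TCset_def turan_V_def
  by (rule arg_cong[where f=card]) (auto simp: turan_clique)

lemma finite_TCset: "finite (TCset n r s)"
  unfolding TCset_def by (rule finite_subset[of _ "Pow {0..<n}"]) auto

lemma TB: assumes "n \<le> r" shows "n choose s \<le> card (TCset n r s)"
proof -
  have "{S. S \<subseteq> {0..<n} \<and> card S = s} \<subseteq> TCset n r s"
    unfolding TCset_def using assms
    by (auto simp: inj_on_def subset_iff) (metis less_le_trans mod_less)
  then have "card {S. S \<subseteq> {0..<n} \<and> card S = s} \<le> card (TCset n r s)"
    by (intro card_mono finite_TCset)
  then show ?thesis by (simp add: n_subsets)
qed

lemma TM: assumes "m \<le> n" shows "card (TCset m r s) \<le> card (TCset n r s)"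
  using assms by (intro card_mono finite_TCset) (auto simp: TCset_def)

lemma group_lemma:
  fixes f :: "nat \<Rightarrow> nat"
  assumes "finite W"
  shows "(\<Sum>B\<in>{B. B \<subseteq> W \<and> card B \<le> s \<and> P B}. f (card B))
       = (\<Sum>i\<le>s. f i * card {B. B \<subseteq> W \<and> card B = i \<and> P B})"
proof -
  let ?F = "{B. B \<subseteq> W \<and> card B \<le> s \<and> P B}"
  have fin: "finite ?F" by (rule finite_subset[of _ "Pow W"]) (use assms in auto)
  have "(\<Sum>B\<in>?F. f (card B)) = (\<Sum>i\<le>s. \<Sum>B\<in>{B \<in> ?F. card B = i}. f (card B))"
    by (rule sum.group[symmetric]) (use fin in auto)
  also have "\<dots> = (\<Sum>i\<le>s. f i * card {B. B \<subseteq> W \<and> card B = i \<and> P B})"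
  proof (rule sum.cong[OF refl])
    fix i assume "i \<in> {..s}"
    then have "{B \<in> ?F. card B = i} = {B. B \<subseteq> W \<and> card B = i \<and> P B}" by auto
    then show "(\<Sum>B\<in>{B \<in> ?F. card B = i}. f (card B)) = f i * card {B. B \<subseteq> W \<and> card B = i \<and> P B}"
      by simp
  qed
  finally show ?thesis .
qed


lemma mod_inj_interval:
  assumes "1 \<le> (r::nat)"
  shows "inj_on (\<lambda>x. x mod r) {m..<m+r}"
proof (rule inj_onI)
  fix x y assume xy: "x \<in> {m..<m+r}" "y \<in> {m..<m+r}" "x mod r = y mod r"
  show "x = y"
  proof (rule ccontr)
    assume "x \<noteq> y"
    then consider "x < y" | "y < x" by linarith
    then show False
    proof cases
      case 1
      then have "r dvd y - x" using xy(3) by (metis mod_eq_dvd_iff_nat less_imp_le)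
      moreover have "0 < y - x" "y - x < r" using 1 xy by auto
      ultimately show False using dvd_imp_le by fastforce
    next
      case 2
      then have "r dvd x - y" using xy(3) by (metis mod_eq_dvd_iff_nat less_imp_le)
      moreover have "0 < x - y" "x - y < r" using 2 xy by auto
      ultimately show False using dvd_imp_le by fastforce
    qed
  qed
qed

lemma TR:
  assumes r1: "1 \<le> r" and rn: "r \<le> n"
  shows "(\<Sum>i\<le>s. (r - i choose (s - i)) * card (TCset (n - r) r i)) \<le> card (TCset n r s)"
proof -
  define p where "p = (\<lambda>x::nat. x mod r)"
  define K where "K = {n-r..<n}"
  define W where "W = {0..<n-r}"
  have K_eq: "K = {n-r..<(n-r)+r}" using rn by (simp add: K_def)
  have injK: "inj_on p K" unfolding p_def K_eq by (rule mod_inj_interval[OF r1])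
  have cardK: "card K = r" using rn by (simp add: K_def)
  have pK: "p ` K = {0..<r}"
  proof (rule card_subset_eq)
    show "p ` K \<subseteq> {0..<r}" using r1 by (auto simp: p_def)
    show "card (p ` K) = card {0..<r}" using card_image[OF injK] cardK by simp
  qed simp
  have WK: "W \<inter> K = {}" by (auto simp: W_def K_def)
  define avail where "avail B = {x \<in> K. p x \<notin> p ` B}" for B
  define \<B> where "\<B> = {B. B \<subseteq> W \<and> card B \<le> s \<and> inj_on p B}"
  have card_avail: "card (avail B) = r - card B" if "B \<in> \<B>" for B
  proof -
    have B: "B \<subseteq> W" "inj_on p B" using that by (auto simp: \<B>_def)
    have finB: "finite B" using B(1) finite_subset by (auto simp: W_def)
    have "p ` avail B = {0..<r} - p ` B"
      using pK unfolding avail_def by auto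
    moreover have "inj_on p (avail B)" using injK by (rule inj_on_subset) (auto simp: avail_def)
    ultimately have "card (avail B) = card ({0..<r} - p ` B)"
      by (metis card_image)
    also have "\<dots> = r - card (p ` B)"
    proof -
      have "p ` B \<subseteq> {0..<r}" using r1 by (auto simp: p_def)
      then show ?thesis by (simp add: card_Diff_subset finB)
    qed
    also have "\<dots> = r - card B" using card_image[OF B(2)] by simp
    finally show ?thesis .
  qed
  define Q where "Q = (SIGMA B:\<B>. {A. A \<subseteq> avail B \<and> card A = s - card B})"
  have finW: "finite W" by (simp add: W_def)
  have finB: "finite \<B>" by (rule finite_subset[of _ "Pow W"]) (use finW in \<open>auto simp: \<B>_def\<close>)
  have finavail: "finite (avail B)" for B by (simp add: avail_def K_def)
  have "card Q = (\<Sum>B\<in>\<B>. card {A. A \<subseteq> avail B \<and> card A = s - card B})"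
    unfolding Q_def by (rule card_SigmaI[OF finB]) (auto intro: finite_subset[of _ "Pow (avail _)"] finavail)
  also have "\<dots> = (\<Sum>B\<in>\<B>. (r - card B) choose (s - card B))"
    by (rule sum.cong[OF refl]) (simp add: n_subsets finavail card_avail)
  also have "\<dots> = (\<Sum>i\<le>s. (r - i choose (s - i)) * card {B. B \<subseteq> W \<and> card B = i \<and> inj_on p B})"
    unfolding \<B>_def by (rule group_lemma[OF finW])
  also have "\<dots> = (\<Sum>i\<le>s. (r - i choose (s - i)) * card (TCset (n - r) r i))"
    by (simp add: TCset_def W_def p_def)
  finally have cQ: "card Q = (\<Sum>i\<le>s. (r - i choose (s - i)) * card (TCset (n - r) r i))" .
  define \<psi> where "\<psi> = (\<lambda>(B::nat set, A::nat set). B \<union> A)"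
  have injpsi: "inj_on \<psi> Q"
  proof (rule inj_onI)
    fix x y assume "x \<in> Q" "y \<in> Q" "\<psi> x = \<psi> y"
    moreover obtain B A where "x = (B, A)" by (cases x)
    moreover obtain B' A' where "y = (B', A')" by (cases y)
    ultimately have xy: "x = (B, A)" "y = (B', A')" "B \<subseteq> W" "B' \<subseteq> W"
      "A \<subseteq> K" "A' \<subseteq> K" "B \<union> A = B' \<union> A'"
      by (auto simp: Q_def \<B>_def avail_def \<psi>_def)
    have "B = (B \<union> A) \<inter> W" "B' = (B' \<union> A') \<inter> W" "A = (B \<union> A) \<inter> K" "A' = (B' \<union> A') \<inter> K"
      using xy WK by auto
    then show "x = y" using xy by metis
  qed
  have psiQ: "\<psi> ` Q \<subseteq> TCset n r s"
  proof
    fix z assume "z \<in> \<psi> ` Q"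
    then obtain B A where BA: "B \<in> \<B>" "A \<subseteq> avail B" "card A = s - card B" "z = B \<union> A"
      by (auto simp: Q_def \<psi>_def)
    have B: "B \<subseteq> W" "card B \<le> s" "inj_on p B" using BA(1) by (auto simp: \<B>_def)
    have AK: "A \<subseteq> K" using BA(2) by (auto simp: avail_def)
    have finA: "finite A" "finite B" using AK B(1) finW by (auto simp: K_def intro: finite_subset)
    have disj: "B \<inter> A = {}" using AK B(1) WK by auto
    have "z \<subseteq> {0..<n}" using AK B(1) BA(4) by (auto simp: K_def W_def)
    moreover have "card z = s" using BA(3,4) B(2) disj finA by (simp add: card_Un_disjoint)
    moreover have "inj_on p z"
    proof -
      have "inj_on p A" using injK AK by (rule inj_on_subset)
      moreover have "p ` B \<inter> p ` (A - B) = {}" using BA(2) unfolding avail_def by (auto simp: subset_iff) (metis imageI)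
      ultimately show ?thesis using B(3) BA(4) inj_on_Un by (metis Diff_triv disj inf_commute)
    qed
    ultimately show "z \<in> TCset n r s" by (simp add: TCset_def p_def)
  qed
  have "card Q = card (\<psi> ` Q)" by (rule card_image[OF injpsi, symmetric])
  also have "\<dots> \<le> card (TCset n r s)" by (rule card_mono[OF finite_TCset psiQ])
  finally show ?thesis using cQ by simp
qed


lemma clique_subset: "is_clique E S \<Longrightarrow> T \<subseteq> S \<Longrightarrow> is_clique E T"
  unfolding is_clique_def by blast

lemma HS:
  assumes finV: "finite V" and KV: "K \<subseteq> V" and Kc: "is_clique E K" and cK: "card K = r"
    and free: "\<forall>S. S \<subseteq> V \<and> is_clique E S \<longrightarrow> card S \<le> r"
  shows "k_cliques s V E \<le> (\<Sum>i\<le>s. (r - i choose (s - i)) * k_cliques i (V - K) E)"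
proof -
  define W where "W = V - K"
  define N where "N B = {x \<in> K. \<forall>y\<in>B. {x, y} \<in> E}" for B
  define \<B> where "\<B> = {B. B \<subseteq> W \<and> card B \<le> s \<and> is_clique E B}"
  define Q where "Q = (SIGMA B:\<B>. {A. A \<subseteq> N B \<and> card A = s - card B})"
  have finW: "finite W" using finV by (simp add: W_def)
  have finK: "finite K" using finV KV finite_subset by auto
  have finB: "finite \<B>" by (rule finite_subset[of _ "Pow W"]) (use finW in \<open>auto simp: \<B>_def\<close>)
  have finN: "finite (N B)" for B using finK by (simp add: N_def)
  have cardN: "card (N B) \<le> r - card B" if "B \<in> \<B>" for B
  proof -
    have B: "B \<subseteq> W" "is_clique E B" using that by (auto simp: \<B>_def)
    have finBB: "finite B" using B(1) finW finite_subset by auto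
    have disj: "B \<inter> N B = {}" using B(1) by (auto simp: W_def N_def)
    have "is_clique E (B \<union> N B)"
      using B(2) Kc unfolding is_clique_def N_def by (auto simp: insert_commute)
    moreover have "B \<union> N B \<subseteq> V" using B(1) KV by (auto simp: W_def N_def)
    ultimately have "card (B \<union> N B) \<le> r" using free by blast
    then show ?thesis using disj finBB finN by (simp add: card_Un_disjoint)
  qed
  have "card Q = (\<Sum>B\<in>\<B>. card {A. A \<subseteq> N B \<and> card A = s - card B})"
    unfolding Q_def by (rule card_SigmaI[OF finB]) (auto intro: finite_subset[of _ "Pow (N _)"] finN)
  also have "\<dots> = (\<Sum>B\<in>\<B>. (card (N B)) choose (s - card B))"
    by (rule sum.cong[OF refl]) (simp add: n_subsets finN)
  also have "\<dots> \<le> (\<Sum>B\<in>\<B>. (r - card B) choose (s - card B))"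
    by (rule sum_mono) (simp add: binomial_right_mono cardN)
  also have "\<dots> = (\<Sum>i\<le>s. (r - i choose (s - i)) * card {B. B \<subseteq> W \<and> card B = i \<and> is_clique E B})"
    unfolding \<B>_def by (rule group_lemma[OF finW])
  also have "\<dots> = (\<Sum>i\<le>s. (r - i choose (s - i)) * k_cliques i (V - K) E)"
    by (simp add: k_cliques_def W_def)
  finally have cQ: "card Q \<le> (\<Sum>i\<le>s. (r - i choose (s - i)) * k_cliques i (V - K) E)" .
  define \<phi> where "\<phi> = (\<lambda>S. (S \<inter> W, S \<inter> K))"
  let ?C = "{S. S \<subseteq> V \<and> card S = s \<and> is_clique E S}"
  have injphi: "inj_on \<phi> ?C"
  proof (rule inj_onI)
    fix S T assume "S \<in> ?C" "T \<in> ?C" "\<phi> S = \<phi> T"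
    then have "S = (S \<inter> W) \<union> (S \<inter> K)" "T = (T \<inter> W) \<union> (T \<inter> K)" "S \<inter> W = T \<inter> W" "S \<inter> K = T \<inter> K"
      by (auto simp: W_def \<phi>_def)
    then show "S = T" by metis
  qed
  have phiQ: "\<phi> ` ?C \<subseteq> Q"
  proof
    fix z assume "z \<in> \<phi> ` ?C"
    then obtain S where S: "S \<subseteq> V" "card S = s" "is_clique E S" "z = (S \<inter> W, S \<inter> K)"
      by (auto simp: \<phi>_def)
    have finS: "finite S" using S(1) finV finite_subset by auto
    have "S \<inter> W \<in> \<B>"
      using S finS by (auto simp: \<B>_def intro: clique_subset card_mono)
    moreover have "S \<inter> K \<subseteq> N (S \<inter> W)"
      using S(3) unfolding N_def is_clique_def W_def by auto
    moreover have "card (S \<inter> K) = s - card (S \<inter> W)"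
    proof -
      have "S = (S \<inter> W) \<union> (S \<inter> K)" "(S \<inter> W) \<inter> (S \<inter> K) = {}" using S(1) by (auto simp: W_def)
      then have "card S = card (S \<inter> W) + card (S \<inter> K)" using finS by (metis card_Un_disjoint finite_Int)
      then show ?thesis using S(2) by simp
    qed
    ultimately show "z \<in> Q" using S(4) by (simp add: Q_def)
  qed
  have finQ: "finite Q" unfolding Q_def
    by (rule finite_SigmaI[OF finB]) (auto intro: finite_subset[of _ "Pow (N _)"] finN)
  have "k_cliques s V E = card (\<phi> ` ?C)" unfolding k_cliques_def by (rule card_image[OF injphi, symmetric])
  also have "\<dots> \<le> card Q" by (rule card_mono[OF finQ phiQ])
  finally show ?thesis using cQ by simp
qed


lemma clique_mono_E: "is_clique E S \<Longrightarrow> S \<subseteq> V \<Longrightarrow> E \<inter> Pow V \<subseteq> E' \<Longrightarrow> is_clique E' S"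
  unfolding is_clique_def by blast

lemma zykov:
  assumes r1: "1 \<le> r"
  shows "finite V \<Longrightarrow> (\<forall>S. S \<subseteq> V \<and> is_clique E S \<longrightarrow> card S \<le> r)
          \<Longrightarrow> k_cliques s V E \<le> card (TCset (card V) r s)"
proof (induction "card V" arbitrary: V E s rule: less_induct)
  case less
  note finV = less.prems(1) and free = less.prems(2)
  show ?case
  proof (cases "card V \<le> r")
    case True
    have "k_cliques s V E \<le> card {S. S \<subseteq> V \<and> card S = s}"
      unfolding k_cliques_def by (rule card_mono) (use finV in auto)
    also have "\<dots> = card V choose s" by (rule n_subsets[OF finV])
    also have "\<dots> \<le> card (TCset (card V) r s)" by (rule TB[OF True])
    finally show ?thesis .
  next
    case False
    define F where "F = {E'. E' \<subseteq> Pow V \<and> E \<inter> Pow V \<subseteq> E' \<and> (\<forall>S. S \<subseteq> V \<and> is_clique E' S \<longrightarrow> card S \<le> r)}"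
    have finF: "finite F" by (rule finite_subset[of _ "Pow (Pow V)"]) (use finV in \<open>auto simp: F_def\<close>)
    have E0F: "E \<inter> Pow V \<in> F"
      unfolding F_def using free by (auto simp: is_clique_def)
    define m where "m = Max (card ` F)"
    have "m \<in> card ` F" unfolding m_def using finF E0F by (intro Max_in) auto
    then obtain E' where E'F: "E' \<in> F" and cE': "card E' = m" by auto
    have maxE': "card E'' \<le> card E'" if "E'' \<in> F" for E''
      unfolding cE' m_def using finF that by (intro Max_ge) auto
    have E'V: "E' \<subseteq> Pow V" and EE': "E \<inter> Pow V \<subseteq> E'"
      and free': "\<forall>S. S \<subseteq> V \<and> is_clique E' S \<longrightarrow> card S \<le> r" using E'F by (auto simp: F_def)
    have finE': "finite E'" using E'V finV finite_subset by (metis finite_Pow_iff)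
    have k_le: "k_cliques s V E \<le> k_cliques s V E'"
      unfolding k_cliques_def
      by (rule card_mono) (use finV in \<open>auto intro: finite_subset[of _ "Pow V"] clique_mono_E[OF _ _ EE']\<close>)
    have "\<not> is_clique E' V" using free' False by auto
    then obtain u v where uv: "u \<in> V" "v \<in> V" "u \<noteq> v" "{u, v} \<notin> E'"
      unfolding is_clique_def by blast
    define E'' where "E'' = insert {u, v} E'"
    have "card E'' > card E'" using uv(4) finE' by (simp add: E''_def)
    then have "E'' \<notin> F" using maxE' by fastforce
    moreover have "E'' \<subseteq> Pow V" "E \<inter> Pow V \<subseteq> E''" using E'V EE' uv by (auto simp: E''_def)
    ultimately have "\<not> (\<forall>S. S \<subseteq> V \<and> is_clique E'' S \<longrightarrow> card S \<le> r)"
      unfolding F_def by blast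
    then obtain S where S: "S \<subseteq> V" "is_clique E'' S" "card S > r"
      by (auto simp: not_le)
    have finS: "finite S" using S(1) finV finite_subset by auto
    have uvS: "u \<in> S \<and> v \<in> S"
    proof (rule ccontr)
      assume "\<not> (u \<in> S \<and> v \<in> S)"
      have "is_clique E' S" unfolding is_clique_def
      proof (intro ballI impI)
        fix x y assume xy: "x \<in> S" "y \<in> S" "x \<noteq> y"
        then have "{x,y} \<in> E''" using S(2) unfolding is_clique_def by blast
        moreover have "{x,y} \<noteq> {u,v}" using \<open>\<not> (u \<in> S \<and> v \<in> S)\<close> xy by (auto simp: doubleton_eq_iff)
        ultimately show "{x,y} \<in> E'" by (simp add: E''_def)
      qed
      then show False using free' S(1,3) by (meson not_le)
    qed
    define S' where "S' = S - {v}"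
    have "is_clique E' S'" using S(2) unfolding is_clique_def E''_def S'_def
      by (auto simp: doubleton_eq_iff)
    moreover have "card S' \<ge> r" using S(3) uvS finS by (simp add: S'_def)
    ultimately obtain K where K: "K \<subseteq> S'" "card K = r" "is_clique E' K"
      by (meson clique_subset obtain_subset_with_card_n)
    have KV: "K \<subseteq> V" using K(1) S(1) by (auto simp: S'_def)
    have finK: "finite K" using KV finV finite_subset by auto
    have "k_cliques s V E' \<le> (\<Sum>i\<le>s. (r - i choose (s - i)) * k_cliques i (V - K) E')"
      by (rule HS[OF finV KV K(3) K(2) free'])
    also have "\<dots> \<le> (\<Sum>i\<le>s. (r - i choose (s - i)) * card (TCset (card V - r) r i))"
    proof (rule sum_mono, rule mult_left_mono)
      fix i
      have cVK: "card (V - K) = card V - r" using KV K(2) finK by (simp add: card_Diff_subset)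
      have "card (V - K) < card V" using cVK False r1 by simp
      moreover have "\<forall>S. S \<subseteq> V - K \<and> is_clique E' S \<longrightarrow> card S \<le> r" using free' by blast
      ultimately have "k_cliques i (V - K) E' \<le> card (TCset (card (V - K)) r i)"
        using less.hyps finV by blast
      then show "k_cliques i (V - K) E' \<le> card (TCset (card V - r) r i)" using cVK by simp
    qed simp
    also have "\<dots> \<le> card (TCset (card V) r s)" using False r1 by (intro TR) auto
    finally show ?thesis using k_le by simp
  qed
qed


lemma rho_bound:
  assumes cls: "in_class \<Delta> \<omega> V E" and ne: "V \<noteq> {}" and t2: "t \<ge> 2" and w2: "\<omega> \<ge> 2"
  shows "rho t V E \<le> (1 / real t) * real (card (TCset \<Delta> (\<omega> - 1) (t - 1)))"
proof -
  define r where "r = \<omega> - 1"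
  define T where "T = card (TCset \<Delta> r (t - 1))"
  have sg: "simple_graph V E" and deg: "\<forall>v\<in>V. degree V E v \<le> \<Delta>"
    and om: "\<forall>S. S \<subseteq> V \<and> is_clique E S \<longrightarrow> card S \<le> \<omega>"
    using cls by (auto simp: in_class_def)
  have finV: "finite V" and Ecard: "\<forall>e\<in>E. e \<subseteq> V \<and> card e = 2" using sg by (auto simp: simple_graph_def)
  define C where "C = {S. S \<subseteq> V \<and> card S = t \<and> is_clique E S}"
  define N where "N v = {u \<in> V. {u, v} \<in> E}" for v
  have finC: "finite C" by (rule finite_subset[of _ "Pow V"]) (use finV in \<open>auto simp: C_def\<close>)
  have "t * card C = (\<Sum>S\<in>C. card S)" by (simp add: C_def)
  also have "\<dots> = (\<Sum>S\<in>C. \<Sum>v\<in>V. if v \<in> S then 1 else 0)"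
  proof (rule sum.cong[OF refl])
    fix S assume "S \<in> C"
    then have "S \<subseteq> V" by (simp add: C_def)
    then have "V \<inter> S = S" by blast
    then show "card S = (\<Sum>v\<in>V. if v \<in> S then 1 else 0)"
      using sum.inter_restrict[OF finV, of "\<lambda>_. 1::nat" S] by simp
  qed
  also have "\<dots> = (\<Sum>v\<in>V. \<Sum>S\<in>C. if v \<in> S then 1 else 0)" by (rule sum.swap)
  also have "\<dots> = (\<Sum>v\<in>V. card {S \<in> C. v \<in> S})"
  proof (rule sum.cong[OF refl])
    fix v
    show "(\<Sum>S\<in>C. if v \<in> S then 1 else 0) = card {S \<in> C. v \<in> S}"
      using sum.inter_restrict[OF finC, of "\<lambda>_. 1::nat" "{S. v \<in> S}"]
      by (simp add: Collect_conj_eq Int_commute)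
  qed
  also have "\<dots> \<le> (\<Sum>v\<in>V. T)"
  proof (rule sum_mono)
    fix v assume vV: "v \<in> V"
    have vN: "v \<notin> N v"
    proof
      assume "v \<in> N v"
      then have "{v} \<in> E" by (simp add: N_def)
      then show False using Ecard by fastforce
    qed
    have finN: "finite (N v)" using finV by (simp add: N_def)
    have inj: "inj_on (\<lambda>S. S - {v}) {S \<in> C. v \<in> S}"
      by (rule inj_onI) (metis insert_Diff mem_Collect_eq)
    have img: "(\<lambda>S. S - {v}) ` {S \<in> C. v \<in> S} \<subseteq> {S. S \<subseteq> N v \<and> card S = t - 1 \<and> is_clique E S}"
    proof
      fix z assume "z \<in> (\<lambda>S. S - {v}) ` {S \<in> C. v \<in> S}"
      then obtain S where S: "S \<subseteq> V" "card S = t" "is_clique E S" "v \<in> S" "z = S - {v}"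
        by (auto simp: C_def)
      have "z \<subseteq> N v" using S unfolding N_def is_clique_def by auto
      moreover have "card z = t - 1" using S by simp
      moreover have "is_clique E z" using S(3,5) clique_subset by blast
      ultimately show "z \<in> {S. S \<subseteq> N v \<and> card S = t - 1 \<and> is_clique E S}" by simp
    qed
    have "card {S \<in> C. v \<in> S} \<le> k_cliques (t - 1) (N v) E"
      unfolding k_cliques_def card_image[OF inj, symmetric]
      by (rule card_mono[OF _ img]) (rule finite_subset[of _ "Pow (N v)"], auto simp: finN)
    also have "\<dots> \<le> card (TCset (card (N v)) r (t - 1))"
    proof (rule zykov)
      show "1 \<le> r" using w2 by (simp add: r_def)
      show "finite (N v)" by (rule finN)
      show "\<forall>S. S \<subseteq> N v \<and> is_clique E S \<longrightarrow> card S \<le> r"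
      proof (intro allI impI)
        fix S assume S: "S \<subseteq> N v \<and> is_clique E S"
        have "insert v S \<subseteq> V" using S vV by (auto simp: N_def)
        moreover have "is_clique E (insert v S)"
          using S unfolding is_clique_def N_def by (auto simp: insert_commute subset_iff)
        ultimately have "card (insert v S) \<le> \<omega>" using om by blast
        moreover have "finite S" using S finN finite_subset by auto
        moreover have "v \<notin> S" using S vN by auto
        ultimately show "card S \<le> r" by (simp add: r_def)
      qed
    qed
    also have "\<dots> \<le> T" unfolding T_def
      by (rule TM) (use deg vV in \<open>simp add: degree_def N_def\<close>)
    finally show "card {S \<in> C. v \<in> S} \<le> T" .
  qed
  also have "\<dots> = card V * T" by simp
  finally have key: "t * card C \<le> card V * T" .
  have cV: "card V > 0" using finV ne by (simp add: card_gt_0_iff)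
  have "rho t V E = real (card C) / real (card V)" by (simp add: rho_def k_cliques_def C_def)
  also have "\<dots> \<le> real T / real t"
  proof -
    have "real t * real (card C) \<le> real (card V) * real T" using key by (metis of_nat_le_iff of_nat_mult)
    then show ?thesis using cV t2 by (simp add: divide_simps mult.commute)
  qed
  finally show ?thesis by (simp add: T_def r_def)
qed


lemma card_inj_subsets:
  assumes finX: "finite X" and finY: "finite Y" and pXY: "p ` X \<subseteq> Y"
  shows "card {S. S \<subseteq> X \<and> card S = s \<and> inj_on p S}
       = (\<Sum>R\<in>{R. R \<subseteq> Y \<and> card R = s}. \<Prod>c\<in>R. card {x \<in> X. p x = c})"
proof -
  define \<R> where "\<R> = {R. R \<subseteq> Y \<and> card R = s}"
  define fib where "fib c = {x \<in> X. p x = c}" for c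
  define G where "G R = {S. S \<subseteq> X \<and> inj_on p S \<and> p ` S = R}" for R
  have eq: "{S. S \<subseteq> X \<and> card S = s \<and> inj_on p S} = (\<Union>R\<in>\<R>. G R)"
  proof (intro equalityI subsetI)
    fix S assume "S \<in> {S. S \<subseteq> X \<and> card S = s \<and> inj_on p S}"
    then have S: "S \<subseteq> X" "card S = s" "inj_on p S" by auto
    then have "p ` S \<in> \<R>" using pXY by (auto simp: \<R>_def card_image)
    moreover have "S \<in> G (p ` S)" using S by (simp add: G_def)
    ultimately show "S \<in> (\<Union>R\<in>\<R>. G R)" by blast
  next
    fix S assume "S \<in> (\<Union>R\<in>\<R>. G R)"
    then obtain R where "R \<in> \<R>" "S \<subseteq> X" "inj_on p S" "p ` S = R" by (auto simp: G_def)
    then show "S \<in> {S. S \<subseteq> X \<and> card S = s \<and> inj_on p S}"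
      by (auto simp: \<R>_def card_image[symmetric])
  qed
  have finR: "finite \<R>" by (rule finite_subset[of _ "Pow Y"]) (use finY in \<open>auto simp: \<R>_def\<close>)
  have finG: "finite (G R)" for R by (rule finite_subset[of _ "Pow X"]) (use finX in \<open>auto simp: G_def\<close>)
  have "card (\<Union>R\<in>\<R>. G R) = (\<Sum>R\<in>\<R>. card (G R))"
    by (rule card_UN_disjoint[OF finR]) (simp add: finG, auto simp: G_def)
  also have "\<dots> = (\<Sum>R\<in>\<R>. \<Prod>c\<in>R. card (fib c))"
  proof (rule sum.cong[OF refl])
    fix R assume "R \<in> \<R>"
    then have finRR: "finite R" using finY finite_subset by (auto simp: \<R>_def)
    have bij: "bij_betw (\<lambda>f. f ` R) (PiE R fib) (G R)"
      unfolding bij_betw_def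
    proof
      show "inj_on (\<lambda>f. f ` R) (PiE R fib)"
      proof (rule inj_onI)
        fix f g assume f: "f \<in> PiE R fib" and g: "g \<in> PiE R fib" and fg: "f ` R = g ` R"
        have ef: "f \<in> extensional R" "g \<in> extensional R" using f g by (auto simp: PiE_iff)
        show "f = g"
        proof (rule extensionalityI[OF ef])
          fix c assume c: "c \<in> R"
          then have "f c \<in> g ` R" using fg by blast
          then obtain c' where c': "c' \<in> R" "f c = g c'" by auto
          have "p (f c) = c" using f c by (auto simp: fib_def)
          moreover have "p (g c') = c'" using g c' by (auto simp: fib_def)
          ultimately show "f c = g c" using c' by simp
        qed
      qed
      show "(\<lambda>f. f ` R) ` PiE R fib = G R"
      proof (intro equalityI subsetI)
        fix S assume "S \<in> (\<lambda>f. f ` R) ` PiE R fib"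
        then obtain f where f: "f \<in> PiE R fib" "S = f ` R" by auto
        have pf: "\<And>c. c \<in> R \<Longrightarrow> p (f c) = c \<and> f c \<in> X" using f(1) by (auto simp: fib_def)
        have "S \<subseteq> X" using f(2) pf by auto
        moreover have "inj_on p S" unfolding f(2) by (rule inj_onI) (metis imageE pf)
        moreover have "p ` S = R" unfolding f(2) using pf by (force simp: image_image)
        ultimately show "S \<in> G R" by (simp add: G_def)
      next
        fix S assume "S \<in> G R"
        then have S: "S \<subseteq> X" "inj_on p S" "p ` S = R" by (auto simp: G_def)
        define f where "f = restrict (the_inv_into S p) R"
        have "f \<in> PiE R fib"
          unfolding f_def fib_def using S
          by (auto simp: the_inv_into_into f_the_inv_into_f)
        moreover have "f ` R = S" unfolding f_def using S the_inv_into_onto[OF S(2)] by auto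
        ultimately show "S \<in> (\<lambda>f. f ` R) ` PiE R fib" by blast
      qed
    qed
    show "card (G R) = (\<Prod>c\<in>R. card (fib c))"
      using bij_betw_same_card[OF bij] card_PiE[OF finRR, of fib] by simp
  qed
  finally show ?thesis unfolding eq by (simp add: \<R>_def fib_def)
qed


lemma fibre_card:
  fixes a b r c :: nat
  assumes br: "b < r" and cr: "c < r"
  shows "card {x \<in> {0..<a*r+b}. x mod r = c} = (if c < b then a+1 else a)"
proof -
  define m where "m = (if c < b then a+1 else a)"
  have r0: "r > 0" using br by simp
  have eq: "{x \<in> {0..<a*r+b}. x mod r = c} = (\<lambda>q. q*r + c) ` {..<m}"
  proof (intro equalityI subsetI)
    fix x assume x: "x \<in> {x \<in> {0..<a*r+b}. x mod r = c}"
    define q where "q = x div r"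
    have "x mod r = c" using x by simp
    then have xq: "x = q*r + c" unfolding q_def using div_mult_mod_eq[of x r] by simp
    have "q < m"
    proof (rule ccontr)
      assume "\<not> q < m"
      then have qm: "m \<le> q" by simp
      show False
      proof (cases "c < b")
        case True
        then have "(a+1)*r \<le> q*r" using qm by (intro mult_le_mono1) (simp add: m_def)
        then show False using x xq br by (auto simp: algebra_simps)
      next
        case False
        then have ar: "a*r \<le> q*r" using qm by (intro mult_le_mono1) (simp add: m_def)
        have "q*r + c < a*r + b" using x xq by simp
        then show False using ar False by linarith
      qed
    qed
    then show "x \<in> (\<lambda>q. q*r + c) ` {..<m}" using xq by auto
  next
    fix x assume "x \<in> (\<lambda>q. q*r + c) ` {..<m}"
    then obtain q where q: "q < m" "x = q*r + c" by auto
    have "x mod r = c" using q(2) cr by simp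
    moreover have "x < a*r + b"
    proof (cases "c < b")
      case True
      then have qr: "q*r \<le> a*r" using q(1) by (intro mult_le_mono1) (simp add: m_def)
      show ?thesis using qr q(2) True by linarith
    next
      case False
      then have "(q+1)*r \<le> a*r" using q(1) by (intro mult_le_mono1) (simp add: m_def)
      then show ?thesis using q(2) cr by (simp add: algebra_simps)
    qed
    ultimately show "x \<in> {x \<in> {0..<a*r+b}. x mod r = c}" by simp
  qed
  have inj: "inj_on (\<lambda>q. q*r + c) {..<m}" using r0 by (auto simp: inj_on_def)
  have "card {x \<in> {0..<a*r+b}. x mod r = c} = card {..<m}" using eq card_image[OF inj] by simp
  then show ?thesis by (simp add: m_def)
qed

lemma count_split:
  assumes br: "b \<le> r"
  shows "card {R. R \<subseteq> {0..<r} \<and> card R = s \<and> card (R \<inter> {c. c < b}) = k}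
       = (if k \<le> s then (b choose k) * ((r - b) choose (s - k)) else 0)"
proof (cases "k \<le> s")
  case False
  have "{R. R \<subseteq> {0..<r} \<and> card R = s \<and> card (R \<inter> {c. c < b}) = k} = {}"
  proof -
    have "card (R \<inter> {c. c < b}) \<le> card R" if "R \<subseteq> {0..<r}" for R
      using that by (intro card_mono) (auto intro: finite_subset)
    then show ?thesis using False by fastforce
  qed
  then show ?thesis using False by simp
next
  case True
  let ?P = "{c::nat. c < b}"
  define AA where "AA = {A. A \<subseteq> {0..<b} \<and> card A = k}"
  define BB where "BB = {B. B \<subseteq> {b..<r} \<and> card B = s - k}"
  define h where "h = (\<lambda>(A::nat set, B). A \<union> B)"
  have inj: "inj_on h (AA \<times> BB)"
  proof (rule inj_onI)
    fix x y assume "x \<in> AA \<times> BB" "y \<in> AA \<times> BB" "h x = h y"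
    moreover obtain A B where "x = (A, B)" by (cases x)
    moreover obtain A' B' where "y = (A', B')" by (cases y)
    ultimately have xy: "x = (A, B)" "y = (A', B')" "A \<subseteq> ?P" "A' \<subseteq> ?P" "B \<subseteq> -?P" "B' \<subseteq> -?P"
      "A \<union> B = A' \<union> B'"
      by (auto simp: AA_def BB_def h_def)
    have "A = (A \<union> B) \<inter> ?P" "A' = (A' \<union> B') \<inter> ?P" "B = (A \<union> B) - ?P" "B' = (A' \<union> B') - ?P"
      using xy(3-6) by auto
    then show "x = y" using xy by metis
  qed
  have img: "h ` (AA \<times> BB) = {R. R \<subseteq> {0..<r} \<and> card R = s \<and> card (R \<inter> ?P) = k}"
  proof (intro equalityI subsetI)
    fix R assume "R \<in> h ` (AA \<times> BB)"
    then obtain A B where AB: "A \<subseteq> {0..<b}" "card A = k" "B \<subseteq> {b..<r}" "card B = s - k" "R = A \<union> B"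
      by (auto simp: AA_def BB_def h_def)
    have fin: "finite A" "finite B" using AB by (auto intro: finite_subset)
    have disj: "A \<inter> B = {}"
    proof -
      { fix x assume "x \<in> A" "x \<in> B"
        then have "x < b" "b \<le> x" using AB(1,3) by (auto simp: subset_iff)
        then have False by simp }
      then show ?thesis by blast
    qed
    have "R \<subseteq> {0..<r}" using AB br by auto
    moreover have "card R = s" using AB disj fin True by (simp add: card_Un_disjoint)
    moreover have "R \<inter> ?P = A" using AB by auto
    ultimately show "R \<in> {R. R \<subseteq> {0..<r} \<and> card R = s \<and> card (R \<inter> ?P) = k}" using AB by simp
  next
    fix R assume "R \<in> {R. R \<subseteq> {0..<r} \<and> card R = s \<and> card (R \<inter> ?P) = k}"
    then have R: "R \<subseteq> {0..<r}" "card R = s" "card (R \<inter> ?P) = k" by auto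
    have finR: "finite R" using R(1) by (auto intro: finite_subset)
    have "card R = card (R \<inter> ?P) + card (R - ?P)"
      using finR by (metis card_Int_Diff)
    then have "card (R - ?P) = s - k" using R by simp
    then have "(R \<inter> ?P, R - ?P) \<in> AA \<times> BB" using R(1,3) by (auto simp: AA_def BB_def)
    moreover have "R = h (R \<inter> ?P, R - ?P)" by (auto simp: h_def)
    ultimately show "R \<in> h ` (AA \<times> BB)" by blast
  qed
  have "card {R. R \<subseteq> {0..<r} \<and> card R = s \<and> card (R \<inter> ?P) = k} = card AA * card BB"
    unfolding img[symmetric] card_image[OF inj] card_cartesian_product ..
  also have "\<dots> = (b choose k) * ((r - b) choose (s - k))"
    by (simp add: AA_def BB_def n_subsets)
  finally show ?thesis using True by simp
qed

lemma turan_formula: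
  fixes a b r s :: nat
  assumes br: "b < r"
  shows "card (TCset (a*r+b) r s)
       = (\<Sum>k=0..b. (if k \<le> s then (b choose k) * ((r - b) choose (s - k)) else 0) * ((a+1)^k * a^(s-k)))"
proof -
  let ?P = "{c::nat. c < b}"
  define \<R> where "\<R> = {R. R \<subseteq> {0..<r} \<and> card R = s}"
  define g where "g R = card (R \<inter> ?P)" for R
  have finR: "finite \<R>" by (rule finite_subset[of _ "Pow {0..<r}"]) (auto simp: \<R>_def)
  have "card (TCset (a*r+b) r s) = (\<Sum>R\<in>\<R>. \<Prod>c\<in>R. card {x \<in> {0..<a*r+b}. x mod r = c})"
    unfolding TCset_def \<R>_def by (rule card_inj_subsets) (use br in auto)
  also have "\<dots> = (\<Sum>R\<in>\<R>. \<Prod>c\<in>R. if c < b then a+1 else a)"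
  proof (rule sum.cong[OF refl], rule prod.cong[OF refl])
    fix R c assume "R \<in> \<R>" "c \<in> R"
    then have "c < r" by (auto simp: \<R>_def)
    then show "card {x \<in> {0..<a*r+b}. x mod r = c} = (if c < b then a+1 else a)"
      by (rule fibre_card[OF br])
  qed
  also have "\<dots> = (\<Sum>R\<in>\<R>. (a+1)^(g R) * a^(s - g R))"
  proof (rule sum.cong[OF refl])
    fix R assume R: "R \<in> \<R>"
    then have finRR: "finite R" by (auto simp: \<R>_def intro: finite_subset)
    have "card R = card (R \<inter> ?P) + card (R \<inter> - ?P)"
      using finRR by (metis card_Int_Diff Diff_eq)
    then have "card (R \<inter> - ?P) + g R = s" using R unfolding \<R>_def g_def by simp
    then have c2: "card (R \<inter> - ?P) = s - g R" by arith
    show "(\<Prod>c\<in>R. if c < b then a+1 else a) = (a+1)^(g R) * a^(s - g R)"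
      unfolding prod.If_cases[OF finRR] prod_constant c2 by (simp add: g_def)
  qed
  also have "\<dots> = (\<Sum>k=0..b. \<Sum>R\<in>{R \<in> \<R>. g R = k}. (a+1)^(g R) * a^(s - g R))"
  proof (rule sum.group[symmetric, OF finR])
    show "g ` \<R> \<subseteq> {0..b}"
    proof
      fix k assume "k \<in> g ` \<R>"
      then obtain R where "R \<in> \<R>" "k = g R" by auto
      moreover have "R \<inter> ?P \<subseteq> {0..<b}" by auto
      ultimately have "k \<le> card {0..<b}" unfolding g_def by (metis card_mono finite_atLeastLessThan)
      then show "k \<in> {0..b}" by simp
    qed
  qed simp
  also have "\<dots> = (\<Sum>k=0..b. card {R \<in> \<R>. g R = k} * ((a+1)^k * a^(s-k)))"
    by (rule sum.cong[OF refl]) simp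
  also have "\<dots> = (\<Sum>k=0..b. (if k \<le> s then (b choose k) * ((r - b) choose (s - k)) else 0) * ((a+1)^k * a^(s-k)))"
  proof (rule sum.cong[OF refl])
    fix k
    have "{R \<in> \<R>. g R = k} = {R. R \<subseteq> {0..<r} \<and> card R = s \<and> card (R \<inter> ?P) = k}"
      by (auto simp: \<R>_def g_def)
    then show "card {R \<in> \<R>. g R = k} * ((a+1)^k * a^(s-k))
      = (if k \<le> s then (b choose k) * ((r - b) choose (s - k)) else 0) * ((a+1)^k * a^(s-k))"
      using count_split[of b r s k] br by simp
  qed
  finally show ?thesis .
qed


theorem mainTheorem4:
  fixes t \<Delta> \<omega> a b :: nat
  assumes "t \<ge> 2" and "\<Delta> \<ge> 2" and "\<omega> \<ge> 2"
    and "\<Delta> = a * (\<omega> - 1) + b" and "b < \<omega> - 1"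
  shows "f_sup t \<Delta> \<omega>
           \<le> (1 / real t) * real (k_cliques (t - 1) (turan_V \<Delta>) (turan_E \<Delta> (\<omega> - 1)))
       \<and> (1 / real t) * real (k_cliques (t - 1) (turan_V \<Delta>) (turan_E \<Delta> (\<omega> - 1)))
           = (1 / real t) * (\<Sum>k = 0..b. if k \<le> t - 1 then
                 real (b choose k) * real ((\<omega> - 1 - b) choose (t - 1 - k))
                 * real (a + 1) ^ k * real a ^ (t - 1 - k)
               else 0)"
proof
  note KTeq = KT[of "t - 1" \<Delta> "\<omega> - 1"]
  show "f_sup t \<Delta> \<omega> \<le> (1 / real t) * real (k_cliques (t - 1) (turan_V \<Delta>) (turan_E \<Delta> (\<omega> - 1)))"
    unfolding f_sup_def KTeq
  proof (rule cSup_least)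
    have "in_class \<Delta> \<omega> {0::nat} {}"
      unfolding in_class_def simple_graph_def degree_def
      using assms(3) by (auto simp: subset_singleton_iff)
    then show "{rho t V E | (V :: nat set) (E :: nat set set). in_class \<Delta> \<omega> V E \<and> V \<noteq> {}} \<noteq> {}"
      by blast
  next
    fix x assume "x \<in> {rho t V E | (V :: nat set) (E :: nat set set). in_class \<Delta> \<omega> V E \<and> V \<noteq> {}}"
    then obtain V :: "nat set" and E where "x = rho t V E" "in_class \<Delta> \<omega> V E" "V \<noteq> {}" by blast
    then show "x \<le> (1 / real t) * real (card (TCset \<Delta> (\<omega> - 1) (t - 1)))"
      using rho_bound assms(1,3) by blast
  qed
next
  have "card (TCset \<Delta> (\<omega> - 1) (t - 1))
      = (\<Sum>k=0..b. (if k \<le> t - 1 then (b choose k) * ((\<omega> - 1 - b) choose (t - 1 - k)) else 0)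
                    * ((a+1)^k * a^(t - 1 - k)))"
    unfolding assms(4) by (rule turan_formula[OF assms(5)])
  then have "real (card (TCset \<Delta> (\<omega> - 1) (t - 1))) = (\<Sum>k=0..b. real ((if k \<le> t - 1 then (b choose k) * ((\<omega> - 1 - b) choose (t - 1 - k)) else 0)
                    * ((a+1)^k * a^(t - 1 - k))))"
    by (simp only: of_nat_sum)
  also have "\<dots> = (\<Sum>k = 0..b. if k \<le> t - 1 then
                 real (b choose k) * real ((\<omega> - 1 - b) choose (t - 1 - k))
                 * real (a + 1) ^ k * real a ^ (t - 1 - k)
               else 0)"
    by (rule sum.cong[OF refl]) (simp add: mult.assoc)
  finally have "real (card (TCset \<Delta> (\<omega> - 1) (t - 1))) = (\<Sum>k = 0..b. if k \<le> t - 1 then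
                 real (b choose k) * real ((\<omega> - 1 - b) choose (t - 1 - k))
                 * real (a + 1) ^ k * real a ^ (t - 1 - k)
               else 0)" .
  then show "(1 / real t) * real (k_cliques (t - 1) (turan_V \<Delta>) (turan_E \<Delta> (\<omega> - 1)))
           = (1 / real t) * (\<Sum>k = 0..b. if k \<le> t - 1 then
                 real (b choose k) * real ((\<omega> - 1 - b) choose (t - 1 - k))
                 * real (a + 1) ^ k * real a ^ (t - 1 - k)
               else 0)" by (simp add: KT)
qed

end
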